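(* Let $(M,\widetilde B)$ be a root of unity quantum seed satisfying condition (Coprime). Then for every $k\in\mathrm{ex}$, $$M(e_k)^\ell\big(\mu_k(M)(e_k)\big)^\ell=\prod_{b_{ik}>0}\big(M(e_i)^\ell\big)^{b_{ik}}+\prod_{b_{ik}<0}\big(M(e_i)^\ell\big)^{-b_{ik}}.$$
   Context: Let $\ell$ be a positive integer, $\mathbb Z_\ell=\mathbb Z/\ell\mathbb Z$, $\varepsilon^{1/2}\in\mathbb C$ a primitive $\ell$-th root of unity, $\mathcal A^{1/2}_\varepsilon=\mathbb Z[\varepsilon^{1/2}]$, $\varepsilon^{a/2}=(\varepsilon^{1/2})^a$ for $a\in\mathbb Z_\ell$; $\overline C$ is the reduction mod $\ell$ of an integer matrix $C$; $e_1,\dots,e_N$ is the standard basis of $\mathbb Z^N$. For a skew-symmetric bilinear form $\Lambda:\mathbb Z^N\times\mathbb Z^N\to\mathbb Z_\ell$ with matrix $(\lambda_{ij})$, $\mathcal T_\varepsilon(\Lambda)$ is the $\mathcal A^{1/2}_\varepsilon$-algebra with basis $\{X^f\}_{f\in\mathbb Z^N}$ and $X^fX^g=\varepsilon^{\Lambda(f,g)/2}X^{f+g}$. A root of unity toric frame of a division algebra $\mathcal F$ over $\mathbb Q(\varepsilon^{1/2})$ is a map $M:\mathbb Z^N\to\mathcal F$ such that for some (unique) skew-symmetric $\Lambda=:\Lambda_M$ there is an injective $\mathcal A^{1/2}_\varepsilon$-algebra map $\phi:\mathcal T_\varepsilon(\Lambda)\to\mathcal F$, $\phi(X^f)=M(f)$,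 with $\mathcal F$ the skew field of fractions of its image. Fix $\mathrm{ex}\subseteq[1,N]$. An exchange matrix $\widetilde B=(b_{ij})$ is an integer matrix with rows indexed by $[1,N]$, columns by $\mathrm{ex}$, principal part $B$, $k$-th column $b^k\in\mathbb Z^N$. $(\Lambda,\widetilde B)$ is $\ell$-compatible if there is $D=\mathrm{diag}(d_j)_{j\in\mathrm{ex}}$, $d_j\in\mathbb Z_{>0}$, with $DB$ skew-symmetric and $\sum_k\overline b_{kj}\lambda_{ki}=\delta_{ij}\overline d_j$ in $\mathbb Z_\ell$ for all $i\in[1,N]$, $j\in\mathrm{ex}$. A root of unity quantum seed is $(M,\widetilde B)$ with $(\Lambda_M,\widetilde B)$ $\ell$-compatible. Condition (Coprime): $\ell$ is odd and coprime to all $d_k$, $k\in\mathrm{ex}$. For $b\in\mathbb Z^N$, $[b]_\pm$ keeps the entries $b_i$ with $\pm b_i\ge0$ and sets the others to $0$. The mutated frame satisfies $\mu_k(M)(e_k)=M(-e_k+[b^k]_+)+M(-e_k-[b^k]_-)$. *)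

theory Defs
  imports Complex_Main "HOL-Computational_Algebra.Polynomial" "HOL-Library.Function_Algebras"
begin

(* Z^N is modelled as functions 'n => int on a finite, linearly ordered index type 'n
   (playing the role of [1,N]); the linear order is only used to write the products
   of the (pairwise commuting) elements M(e_i)^l in the noncommutative ring F. *)

definition unitvec :: "'n \<Rightarrow> ('n \<Rightarrow> int)" where
  "unitvec k = (\<lambda>i. if i = k then 1 else 0)"

definition pos_part :: "('n \<Rightarrow> int) \<Rightarrow> ('n \<Rightarrow> int)" where
  "pos_part b = (\<lambda>i. if b i \<ge> 0 then b i else 0)"
definition neg_part :: "('n \<Rightarrow> int) \<Rightarrow> ('n \<Rightarrow> int)" where
  "neg_part b = (\<lambda>i. if b i \<le> 0 then b i else 0)"

definition col :: "('n \<Rightarrow> 'n \<Rightarrow> int) \<Rightarrow> 'n \<Rightarrow> ('n \<Rightarrow> int)" where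
  "col B k = (\<lambda>i. B i k)"

definition primitive_root :: "nat \<Rightarrow> complex \<Rightarrow> bool" where
  "primitive_root l z \<longleftrightarrow> 0 < l \<and> z ^ l = 1 \<and> (\<forall>m. 0 < m \<and> m < l \<longrightarrow> z ^ m \<noteq> 1)"

(* A^{1/2}_eps = Z[eps^{1/2}] and Q(eps^{1/2}) as subsets of C *)
definition Zring :: "complex \<Rightarrow> complex set" where
  "Zring z = {poly (map_poly of_int p) z | p :: int poly. True}"
definition Qfield :: "complex \<Rightarrow> complex set" where
  "Qfield z = {poly (map_poly of_rat p) z | p :: rat poly. True}"

(* F is a division algebra over Q(z): emb is a ring homomorphism from Q(z) into the
   centre of the division ring F *)
definition central_embedding :: "complex \<Rightarrow> (complex \<Rightarrow> 'a::division_ring) \<Rightarrow> bool" where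
  "central_embedding z emb \<longleftrightarrow>
     emb 1 = 1 \<and>
     (\<forall>x\<in>Qfield z. \<forall>y\<in>Qfield z. emb (x + y) = emb x + emb y \<and> emb (x * y) = emb x * emb y) \<and>
     (\<forall>x\<in>Qfield z. \<forall>a. emb x * a = a * emb x)"

(* eps^{a/2} = (eps^{1/2})^a for a in Z_l (a given by an integer representative) *)
definition eps_half :: "nat \<Rightarrow> complex \<Rightarrow> int \<Rightarrow> complex" where
  "eps_half l z a = z ^ nat (a mod int l)"

(* bilinear form Lambda : Z^N x Z^N -> Z_l with matrix lam (integer representatives mod l) *)
definition bform :: "('n::finite \<Rightarrow> 'n \<Rightarrow> int) \<Rightarrow> ('n \<Rightarrow> int) \<Rightarrow> ('n \<Rightarrow> int) \<Rightarrow> int" where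
  "bform lam f g = (\<Sum>i\<in>UNIV. \<Sum>j\<in>UNIV. f i * lam i j * g j)"

definition skew_mod :: "nat \<Rightarrow> ('n \<Rightarrow> 'n \<Rightarrow> int) \<Rightarrow> bool" where
  "skew_mod l lam \<longleftrightarrow> (\<forall>i j. (lam i j + lam j i) mod int l = 0)"

(* image of phi : T_eps(Lambda) -> F, i.e. A-linear combinations of the M(f) *)
definition frame_image :: "complex \<Rightarrow> (complex \<Rightarrow> 'a::division_ring) \<Rightarrow> (('n \<Rightarrow> int) \<Rightarrow> 'a) \<Rightarrow> 'a set" where
  "frame_image z emb M =
     {\<Sum>f\<in>S. emb (c f) * M f | S c. finite S \<and> (\<forall>f\<in>S. c f \<in> Zring z)}"

definition toric_frame ::
  "nat \<Rightarrow> complex \<Rightarrow> (complex \<Rightarrow> 'a::division_ring) \<Rightarrow> ('n::finite \<Rightarrow> 'n \<Rightarrow> int)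
     \<Rightarrow> (('n \<Rightarrow> int) \<Rightarrow> 'a) \<Rightarrow> bool" where
  "toric_frame l z emb lam M \<longleftrightarrow>
     skew_mod l lam \<and>
     \<comment> \<open>phi is a unital algebra map: phi(X^0) = 1, phi(X^f X^g) = phi(X^f) phi(X^g)\<close>
     M 0 = 1 \<and>
     (\<forall>f g. M f * M g = emb (eps_half l z (bform lam f g)) * M (f + g)) \<and>
     \<comment> \<open>phi is injective: the M(f) are linearly independent over A\<close>
     (\<forall>S c. finite S \<longrightarrow> (\<forall>f\<in>S. c f \<in> Zring z) \<longrightarrow>
        (\<Sum>f\<in>S. emb (c f) * M f) = 0 \<longrightarrow> (\<forall>f\<in>S. c f = 0)) \<and>
     \<comment> \<open>F is the skew field of fractions of the image\<close>
     (\<forall>x. \<exists>y w. y \<in> frame_image z emb M \<and> w \<in> frame_image z emb M \<and> w \<noteq> 0 \<and> x = y * inverse w)"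

definition l_compatible ::
  "nat \<Rightarrow> ('n::finite \<Rightarrow> 'n \<Rightarrow> int) \<Rightarrow> 'n set \<Rightarrow> ('n \<Rightarrow> 'n \<Rightarrow> int) \<Rightarrow> ('n \<Rightarrow> int) \<Rightarrow> bool" where
  "l_compatible l lam ex B d \<longleftrightarrow>
     (\<forall>j\<in>ex. d j > 0) \<and>
     (\<forall>i\<in>ex. \<forall>j\<in>ex. d i * B i j = - (d j * B j i)) \<and>
     (\<forall>i j. j \<in> ex \<longrightarrow> (\<Sum>k\<in>UNIV. B k j * lam k i) mod int l = (if i = j then d j else 0) mod int l)"

definition coprime_cond :: "nat \<Rightarrow> 'n set \<Rightarrow> ('n \<Rightarrow> int) \<Rightarrow> bool" where
  "coprime_cond l ex d \<longleftrightarrow> odd l \<and> (\<forall>k\<in>ex. coprime (int l) (d k))"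

definition mut_ek :: "(('n \<Rightarrow> int) \<Rightarrow> 'a::ring) \<Rightarrow> ('n \<Rightarrow> 'n \<Rightarrow> int) \<Rightarrow> 'n \<Rightarrow> 'a" where
  "mut_ek M B k = M (- unitvec k + pos_part (col B k)) + M (- unitvec k - neg_part (col B k))"

end

theory Submission
  imports Defs
begin


fun qb :: "'b::ring_1 \<Rightarrow> nat \<Rightarrow> nat \<Rightarrow> 'b" where
  "qb w n 0 = 1"
| "qb w 0 (Suc j) = 0"
| "qb w (Suc n) (Suc j) = qb w n j + w ^ Suc j * qb w n (Suc j)"

lemma qb_gt: "n < j \<Longrightarrow> qb w n j = 0"
proof (induction n arbitrary: j)
  case 0 then show ?case by (cases j) auto
next
  case (Suc n) then show ?case by (cases j) auto
qed

lemma qb_nn: "qb w n n = 1"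
  by (induction n) (auto simp: qb_gt)

definition qF :: "'b::comm_ring_1 \<Rightarrow> nat \<Rightarrow> 'b" where
  "qF w m = (\<Prod>i\<in>{1..m}. 1 - w ^ i)"

lemma qF_Suc: "qF w (Suc m) = qF w m * (1 - w ^ Suc m)"
  unfolding qF_def by (simp add: prod.nat_ivl_Suc' mult.commute)

lemma qF_0: "qF w 0 = 1" unfolding qF_def by simp

lemma qb_closed: "j \<le> n \<Longrightarrow> qb (w::'b::comm_ring_1) n j * qF w j * qF w (n - j) = qF w n"
proof (induction n arbitrary: j)
  case 0 then show ?case by (simp add: qF_0)
next
  case (Suc n)
  show ?case
  proof (cases j)
    case 0 then show ?thesis by (simp add: qF_0)
  next
    case (Suc i)
    show ?thesis
    proof (cases "i < n")
      case True
      have h1: "qb w n i * qF w i * qF w (n - i) = qF w n" using Suc.IH True by simp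
      have h2: "qb w n (Suc i) * qF w (Suc i) * qF w (n - Suc i) = qF w n" using Suc.IH True by simp
      have e: "n - i = Suc (n - Suc i)" using True by simp
      have "qb w (Suc n) j * qF w j * qF w (Suc n - j)
          = (qb w n i + w ^ Suc i * qb w n (Suc i)) * (qF w i * (1 - w ^ Suc i)) * qF w (n - i)"
        using Suc by (simp add: qF_Suc)
      also have "\<dots> = (qb w n i * qF w i * qF w (n - i)) * (1 - w ^ Suc i)
           + w ^ Suc i * (qb w n (Suc i) * qF w (Suc i) * qF w (n - Suc i)) * (1 - w ^ (n - i))"
        unfolding e qF_Suc by (simp add: algebra_simps)
      also have "\<dots> = qF w n * ((1 - w ^ Suc i) + w ^ Suc i * (1 - w ^ (n - i)))"
        unfolding h1 h2 by (simp add: algebra_simps)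
      also have "w ^ Suc i * w ^ (n - i) = w ^ Suc n"
      proof -
        have "Suc i + (n - i) = Suc n" using True by simp
        then show ?thesis by (metis power_add)
      qed
      then have "(1 - w ^ Suc i) + w ^ Suc i * (1 - w ^ (n - i)) = 1 - w ^ Suc n"
        by (simp add: algebra_simps)
      finally show ?thesis by (simp add: qF_Suc)
    next
      case False
      then have "i = n" using Suc Suc.prems by simp
      then show ?thesis using Suc Suc.IH[of n] by (simp add: qF_Suc qF_0 qb_gt qb_nn)
    qed
  qed
qed

lemma qb_vanish:
  fixes w :: complex
  assumes "w ^ l = 1" "\<And>i. 0 < i \<Longrightarrow> i < l \<Longrightarrow> w ^ i \<noteq> 1" "0 < j" "j < l"
  shows "qb w l j = 0"
proof -
  have nz: "qF w m \<noteq> 0" if "m < l" for m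
    unfolding qF_def using assms(2) that by (auto simp: prod_zero_iff)
  have "qF w l = 0" using assms(1,4) unfolding qF_def
    by (subst prod_zero_iff) auto
  then have "qb w l j * qF w j * qF w (l - j) = 0" using qb_closed[of j l w] assms by simp
  then show ?thesis using nz[of j] nz[of "l - j"] assms by simp
qed


lemma pow_central:
  fixes W :: "'a::ring_1"
  assumes "\<And>a. W * a = a * W"
  shows "W ^ m * a = a * W ^ m"
proof (induction m)
  case (Suc m)
  have "W ^ Suc m * a = W * (W ^ m * a)" by (simp only: power_Suc mult.assoc)
  also have "\<dots> = W * (a * W ^ m)" by (simp only: Suc)
  also have "\<dots> = (W * a) * W ^ m" by (simp only: mult.assoc)
  also have "\<dots> = (a * W) * W ^ m" by (simp only: assms[of a])
  also have "\<dots> = a * W ^ Suc m" by (simp only: power_Suc mult.assoc)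
  finally show ?case .
qed simp

lemma qb_central:
  assumes "\<And>a. W * a = a * W"
  shows "qb W n j * a = a * qb W n j"
proof (induction n arbitrary: j)
  case 0 then show ?case by (cases j) auto
next
  case (Suc n)
  show ?case
  proof (cases j)
    case (Suc i)
    have "qb W (Suc n) j * a = qb W n i * a + W ^ Suc i * (qb W n (Suc i) * a)"
      using Suc by (simp add: distrib_right mult.assoc)
    also have "\<dots> = a * qb W n i + (W ^ Suc i * a) * qb W n (Suc i)"
      using Suc.IH by (simp add: mult.assoc)
    also have "\<dots> = a * qb W n i + a * (W ^ Suc i * qb W n (Suc i))"
      by (metis mult.assoc pow_central[OF assms])
    also have "\<dots> = a * qb W (Suc n) j" using Suc by (simp add: distrib_left)
    finally show ?thesis .
  qed simp
qed

lemma y_xpow: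
  fixes W :: "'a::ring_1"
  assumes "\<And>a. W * a = a * W" and "y * x = W * x * y"
  shows "y * x ^ j = W ^ j * x ^ j * y"
proof (induction j)
  case (Suc j)
  have "y * x ^ Suc j = (y * x) * x ^ j" by (metis mult.assoc power_Suc)
  also have "\<dots> = W * x * (y * x ^ j)" using assms(2) by (simp add: mult.assoc)
  also have "\<dots> = W * x * (W ^ j * x ^ j * y)" using Suc by simp
  also have "\<dots> = W * (x * W ^ j) * x ^ j * y" by (simp add: mult.assoc)
  also have "\<dots> = W * (W ^ j * x) * x ^ j * y" using pow_central[OF assms(1), of j x] by simp
  also have "\<dots> = W ^ Suc j * x ^ Suc j * y" by (simp add: mult.assoc)
  finally show ?case .
qed simp

lemma qbinom:
  fixes W :: "'a::ring_1"
  assumes c: "\<And>a. W * a = a * W" and yx: "y * x = W * x * y"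
  shows "(x + y) ^ n = (\<Sum>j\<le>n. qb W n j * x ^ j * y ^ (n - j))"
proof (induction n)
  case 0 then show ?case by simp
next
  case (Suc n)
  let ?S = "\<Sum>j\<le>n. qb W n j * x ^ j * y ^ (n - j)"
  have A: "x * ?S = (\<Sum>j\<le>n. qb W n j * x ^ Suc j * y ^ (n - j))"
    unfolding sum_distrib_left
  proof (rule sum.cong[OF refl])
    fix j
    show "x * (qb W n j * x ^ j * y ^ (n - j)) = qb W n j * x ^ Suc j * y ^ (n - j)"
    proof -
      have "x * (qb W n j * x ^ j * y ^ (n - j)) = (x * qb W n j) * x ^ j * y ^ (n - j)"
        by (simp only: mult.assoc)
      also have "\<dots> = (qb W n j * x) * x ^ j * y ^ (n - j)"
        by (simp only: qb_central[OF c, of n j x])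
      also have "\<dots> = qb W n j * x ^ Suc j * y ^ (n - j)"
        by (simp only: mult.assoc power_Suc)
      finally show ?thesis .
    qed
  qed
  have B: "y * ?S = (\<Sum>j\<le>n. qb W n j * W ^ j * x ^ j * y ^ (Suc n - j))"
    unfolding sum_distrib_left
  proof (rule sum.cong[OF refl])
    fix j assume j: "j \<in> {..n}"
    have "y * (qb W n j * x ^ j * y ^ (n - j)) = qb W n j * (y * x ^ j) * y ^ (n - j)"
    proof -
      have "y * (qb W n j * x ^ j * y ^ (n - j)) = (y * qb W n j) * x ^ j * y ^ (n - j)"
        by (simp only: mult.assoc)
      also have "\<dots> = (qb W n j * y) * x ^ j * y ^ (n - j)"
        by (simp only: qb_central[OF c, of n j y])
      also have "\<dots> = qb W n j * (y * x ^ j) * y ^ (n - j)"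
        by (simp only: mult.assoc)
      finally show ?thesis .
    qed
    also have "\<dots> = qb W n j * W ^ j * x ^ j * (y * y ^ (n - j))"
      by (simp only: y_xpow[OF c yx, of j] mult.assoc)
    also have "y * y ^ (n - j) = y ^ (Suc n - j)" using j by (simp add: Suc_diff_le)
    finally show "y * (qb W n j * x ^ j * y ^ (n - j)) = qb W n j * W ^ j * x ^ j * y ^ (Suc n - j)" .
  qed
  have B2: "(\<Sum>j\<le>n. qb W n j * W ^ j * x ^ j * y ^ (Suc n - j))
      = y ^ Suc n + (\<Sum>j\<le>n. W ^ Suc j * qb W n (Suc j) * x ^ Suc j * y ^ (n - j))"
  proof -
    have "(\<Sum>j\<le>n. qb W n j * W ^ j * x ^ j * y ^ (Suc n - j))
        = (\<Sum>j\<le>Suc n. qb W n j * W ^ j * x ^ j * y ^ (Suc n - j))"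
      by (simp add: qb_gt)
    also have "\<dots> = y ^ Suc n + (\<Sum>j\<le>n. qb W n (Suc j) * W ^ Suc j * x ^ Suc j * y ^ (n - j))"
      by (subst sum.atMost_Suc_shift) simp
    also have "\<dots> = y ^ Suc n + (\<Sum>j\<le>n. W ^ Suc j * qb W n (Suc j) * x ^ Suc j * y ^ (n - j))"
      by (rule arg_cong[where f="\<lambda>t. y ^ Suc n + t"], rule sum.cong[OF refl])
         (simp only: qb_central[OF c, of n "Suc _" "W ^ Suc _"])
    finally show ?thesis .
  qed
  have "(x + y) ^ Suc n = x * ?S + y * ?S" using Suc by (simp add: distrib_right)
  also have "\<dots> = y ^ Suc n + (\<Sum>j\<le>n. qb W (Suc n) (Suc j) * x ^ Suc j * y ^ (n - j))"
  proof -
    have D: "(\<Sum>j\<le>n. qb W (Suc n) (Suc j) * x ^ Suc j * y ^ (n - j))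
      = (\<Sum>j\<le>n. qb W n j * x ^ Suc j * y ^ (n - j))
      + (\<Sum>j\<le>n. W ^ Suc j * qb W n (Suc j) * x ^ Suc j * y ^ (n - j))"
      by (simp only: qb.simps distrib_right sum.distrib)
    show ?thesis unfolding A B B2 D by (simp only: add_ac)
  qed
  also have "\<dots> = (\<Sum>j\<le>Suc n. qb W (Suc n) j * x ^ j * y ^ (Suc n - j))"
    by (subst sum.atMost_Suc_shift) simp
  finally show ?case .
qed



lemma Qfield_I: "(\<And>i. coeff p i \<in> \<rat>) \<Longrightarrow> poly p z \<in> Qfield z"
  by (erule ratpolyE) (auto simp: Qfield_def)

lemma Qfield_E: "x \<in> Qfield z \<Longrightarrow> \<exists>p. (\<forall>i. coeff p i \<in> \<rat>) \<and> x = poly p z"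
proof -
  assume "x \<in> Qfield z"
  then obtain q where "x = poly (map_poly of_rat q) z" unfolding Qfield_def by blast
  then show ?thesis by (intro exI[of _ "map_poly of_rat q"]) (simp add: coeff_map_poly)
qed

lemma Qfield_add: "x \<in> Qfield z \<Longrightarrow> y \<in> Qfield z \<Longrightarrow> x + y \<in> Qfield z"
proof -
  assume "x \<in> Qfield z" "y \<in> Qfield z"
  then obtain p q where p: "\<forall>i. coeff p i \<in> \<rat>" "x = poly p z" and q: "\<forall>i. coeff q i \<in> \<rat>" "y = poly q z"
    using Qfield_E by metis
  have "poly (p + q) z \<in> Qfield z" by (rule Qfield_I) (simp add: p q Rats_add)
  then show ?thesis using p q by simp
qed

lemma Qfield_mult: "x \<in> Qfield z \<Longrightarrow> y \<in> Qfield z \<Longrightarrow> x * y \<in> Qfield z"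
proof -
  assume "x \<in> Qfield z" "y \<in> Qfield z"
  then obtain p q where p: "\<forall>i. coeff p i \<in> \<rat>" "x = poly p z" and q: "\<forall>i. coeff q i \<in> \<rat>" "y = poly q z"
    using Qfield_E by metis
  have "poly (p * q) z \<in> Qfield z"
    by (rule Qfield_I) (simp add: coeff_mult p q Rats_mult Rats_sum)
  then show ?thesis using p q by simp
qed

lemma Qfield_zpow: "z ^ n \<in> Qfield z"
proof -
  have "poly (monom 1 n) z \<in> Qfield z" by (rule Qfield_I) (simp add: coeff_monom)
  then show ?thesis by (simp add: poly_monom)
qed

lemma Qfield_0: "0 \<in> Qfield z"
proof -
  have "poly 0 z \<in> Qfield z" by (rule Qfield_I) simp
  then show ?thesis by simp
qed

lemma Qfield_1: "1 \<in> Qfield z"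
  using Qfield_zpow[of z 0] by simp

lemma Qfield_pow: "x \<in> Qfield z \<Longrightarrow> x ^ n \<in> Qfield z"
  by (induction n) (simp_all add: Qfield_1 Qfield_mult)

lemma Qfield_qb: "w \<in> Qfield z \<Longrightarrow> qb w n j \<in> Qfield z"
proof (induction n arbitrary: j)
  case 0 then show ?case by (cases j) (simp_all add: Qfield_0 Qfield_1)
next
  case (Suc n) then show ?case
    by (cases j) (simp_all add: Qfield_1 Qfield_add Qfield_mult Qfield_pow)
qed

lemma bform_add_l: "bform lam (f + g) h = bform lam f h + bform lam g h"
  unfolding bform_def by (simp add: distrib_right sum.distrib)
lemma bform_add_r: "bform lam f (g + h) = bform lam f g + bform lam f h"
  unfolding bform_def by (simp add: distrib_left sum.distrib)
lemma bform_diff_r: "bform lam f (g - h) = bform lam f g - bform lam f h"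
  unfolding bform_def by (simp add: right_diff_distrib sum_subtractf)
lemma bform_smul_l: "bform lam (\<lambda>i. c * f i) g = c * bform lam f g"
  unfolding bform_def by (simp add: sum_distrib_left mult.assoc)
lemma bform_smul_r: "bform lam f (\<lambda>i. c * g i) = c * bform lam f g"
  unfolding bform_def by (simp add: sum_distrib_left algebra_simps)

lemma bform_skew:
  assumes "skew_mod l lam"
  shows "int l dvd bform lam f g + bform lam g f"
proof -
  have "bform lam g f = (\<Sum>i\<in>UNIV. \<Sum>j\<in>UNIV. f i * g j * lam j i)"
    unfolding bform_def by (subst sum.swap) (simp add: ac_simps)
  then have "bform lam f g + bform lam g f = (\<Sum>i\<in>UNIV. \<Sum>j\<in>UNIV. f i * g j * (lam i j + lam j i))"
    unfolding bform_def by (simp add: distrib_left sum.distrib ac_simps)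
  moreover have "int l dvd (\<Sum>i\<in>UNIV. \<Sum>j\<in>UNIV. f i * g j * (lam i j + lam j i))"
    using assms unfolding skew_mod_def by (intro dvd_sum dvd_mult) (simp add: dvd_eq_mod_eq_0)
  ultimately show ?thesis by simp
qed

lemma odd_dvd_2: "odd l \<Longrightarrow> int l dvd 2 * x \<Longrightarrow> int l dvd x"
proof -
  assume "odd l" "int l dvd 2 * x"
  moreover have "coprime (int l) 2" using \<open>odd l\<close> by simp
  ultimately show ?thesis using coprime_dvd_mult_right_iff[of "int l" 2 x] by simp
qed

lemma bform_self:
  assumes "skew_mod l lam" "odd l"
  shows "int l dvd bform lam f f"
proof -
  have "int l dvd 2 * bform lam f f" using bform_skew[OF assms(1), of f f] by (simp only: mult_2)
  then show ?thesis using odd_dvd_2[OF assms(2)] by blast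
qed

lemma bform_col:
  assumes "\<forall>i. (\<Sum>a\<in>UNIV. B a k * lam a i) mod int l = (if i = k then dk else 0) mod int l"
  shows "int l dvd bform lam (col B k) g - g k * dk"
proof -
  have "bform lam (col B k) g = (\<Sum>j\<in>UNIV. (\<Sum>a\<in>UNIV. B a k * lam a j) * g j)"
    unfolding bform_def col_def by (subst sum.swap) (simp add: sum_distrib_right)
  moreover have "g k * dk = (\<Sum>j\<in>UNIV. (if j = k then dk else 0) * g j)"
    by (subst sum.cong[OF refl, of _ _ "\<lambda>j. if j = k then dk * g j else 0"]) auto
  ultimately have "bform lam (col B k) g - g k * dk
      = (\<Sum>j\<in>UNIV. ((\<Sum>a\<in>UNIV. B a k * lam a j) - (if j = k then dk else 0)) * g j)"
    by (simp add: sum_subtractf left_diff_distrib)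
  moreover have "int l dvd (\<Sum>j\<in>UNIV. ((\<Sum>a\<in>UNIV. B a k * lam a j) - (if j = k then dk else 0)) * g j)"
    using assms by (intro dvd_sum dvd_mult2) (simp add: mod_eq_dvd_iff)
  ultimately show ?thesis by simp
qed



locale fctx =
  fixes l :: nat and z :: complex and emb :: "complex \<Rightarrow> 'a::division_ring"
    and lam :: "'n::finite \<Rightarrow> 'n \<Rightarrow> int" and M :: "('n \<Rightarrow> int) \<Rightarrow> 'a"
  assumes lpos: "0 < l" and zl: "z ^ l = 1" and lodd: "odd l"
    and emb: "central_embedding z emb"
    and skew: "skew_mod l lam" and M0: "M 0 = 1"
    and Mmul: "\<And>f g. M f * M g = emb (eps_half l z (bform lam f g)) * M (f + g)"
begin

lemma emb1: "emb 1 = 1" using emb unfolding central_embedding_def by blast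
lemma emb_add: "x \<in> Qfield z \<Longrightarrow> y \<in> Qfield z \<Longrightarrow> emb (x + y) = emb x + emb y"
  using emb unfolding central_embedding_def by blast
lemma emb_mult: "x \<in> Qfield z \<Longrightarrow> y \<in> Qfield z \<Longrightarrow> emb (x * y) = emb x * emb y"
  using emb unfolding central_embedding_def by blast
lemma emb_central: "x \<in> Qfield z \<Longrightarrow> emb x * a = a * emb x"
  using emb unfolding central_embedding_def by blast
lemma emb0: "emb 0 = 0"
  using emb_add[OF Qfield_0 Qfield_0] by simp
lemma emb_pow: "x \<in> Qfield z \<Longrightarrow> emb (x ^ n) = emb x ^ n"
  by (induction n) (simp_all add: emb1 emb_mult Qfield_pow)

lemma emb_qb: "w \<in> Qfield z \<Longrightarrow> emb (qb w n j) = qb (emb w) n j"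
proof (induction n arbitrary: j)
  case 0 then show ?case by (cases j) (simp_all add: emb0 emb1)
next
  case (Suc n)
  show ?case
  proof (cases j)
    case 0 then show ?thesis by (simp add: emb1)
  next
    case (Suc i)
    have "emb (qb w (Suc n) j) = emb (qb w n i) + emb (w ^ Suc i) * emb (qb w n (Suc i))"
      using Suc.prems by (simp add: Suc emb_add emb_mult Qfield_mult Qfield_pow Qfield_qb)
    moreover have "emb (w ^ Suc i) = emb w ^ Suc i" by (rule emb_pow[OF Suc.prems])
    ultimately show ?thesis using Suc.IH[OF Suc.prems] by (simp only: Suc qb.simps)
  qed
qed

definition Qs :: "int \<Rightarrow> 'a" where "Qs a = emb (eps_half l z a)"

lemma eps_half_Q: "eps_half l z a \<in> Qfield z"
  unfolding eps_half_def by (rule Qfield_zpow)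

lemma Qs_central: "Qs a * x = x * Qs a"
  unfolding Qs_def by (rule emb_central[OF eps_half_Q])

lemma zpow_mod: "z ^ n = z ^ (n mod l)"
proof -
  have "z ^ n = z ^ (l * (n div l) + n mod l)" by simp
  also have "\<dots> = (z ^ l) ^ (n div l) * z ^ (n mod l)" by (simp only: power_add power_mult)
  finally show ?thesis by (simp add: zl)
qed

lemma eps_half_add: "eps_half l z a * eps_half l z b = eps_half l z (a + b)"
proof -
  have "int ((nat (a mod int l) + nat (b mod int l)) mod l) = (a + b) mod int l"
    using lpos by (simp add: of_nat_mod mod_add_eq)
  then have e: "(nat (a mod int l) + nat (b mod int l)) mod l = nat ((a + b) mod int l)"
    by linarith
  have "eps_half l z a * eps_half l z b = z ^ (nat (a mod int l) + nat (b mod int l))"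
    unfolding eps_half_def by (simp add: power_add)
  also have "\<dots> = z ^ nat ((a + b) mod int l)" by (subst zpow_mod) (simp only: e)
  finally show ?thesis unfolding eps_half_def .
qed

lemma Qs_add: "Qs a * Qs b = Qs (a + b)"
  unfolding Qs_def by (simp add: emb_mult[OF eps_half_Q eps_half_Q, symmetric] eps_half_add)

lemma Qs_cong: "int l dvd a - b \<Longrightarrow> Qs a = Qs b"
proof -
  assume "int l dvd a - b"
  then have "a mod int l = b mod int l" using mod_eq_dvd_iff by blast
  then show ?thesis unfolding Qs_def eps_half_def by simp
qed

lemma Qs_dvd: "int l dvd a \<Longrightarrow> Qs a = 1"
proof -
  assume "int l dvd a"
  then have "Qs a = Qs 0" by (intro Qs_cong) simp
  also have "\<dots> = 1" unfolding Qs_def eps_half_def by (simp add: emb1)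
  finally show ?thesis .
qed

lemma Mmul': "M f * M g = Qs (bform lam f g) * M (f + g)"
  unfolding Qs_def by (rule Mmul)

lemma Mmul_dvd: "int l dvd bform lam f g \<Longrightarrow> M f * M g = M (f + g)"
  by (simp add: Mmul' Qs_dvd)

lemma Mpow: "M f ^ n = M (\<lambda>i. int n * f i)"
proof (induction n)
  case 0
  have "(\<lambda>i. int 0 * f i) = 0" by (simp add: fun_eq_iff)
  then show ?case by (simp add: M0)
next
  case (Suc n)
  have "int l dvd bform lam f (\<lambda>i. int n * f i)"
    using bform_self[OF skew lodd, of f] by (simp add: bform_smul_r)
  then have "M f * M (\<lambda>i. int n * f i) = M (f + (\<lambda>i. int n * f i))" by (rule Mmul_dvd)
  moreover have "f + (\<lambda>i. int n * f i) = (\<lambda>i. int (Suc n) * f i)"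
    by (simp add: fun_eq_iff algebra_simps)
  ultimately show ?case using Suc by simp
qed

lemma Mmul_l: "M (\<lambda>i. int l * f i) * M (\<lambda>i. int l * g i) = M (\<lambda>i. int l * (f i + g i))"
proof -
  have "int l dvd bform lam (\<lambda>i. int l * f i) (\<lambda>i. int l * g i)"
    by (simp add: bform_smul_l bform_smul_r)
  then have "M (\<lambda>i. int l * f i) * M (\<lambda>i. int l * g i) = M ((\<lambda>i. int l * f i) + (\<lambda>i. int l * g i))"
    by (rule Mmul_dvd)
  also have "(\<lambda>i. int l * f i) + (\<lambda>i. int l * g i) = (\<lambda>i. int l * (f i + g i))"
    by (simp add: fun_eq_iff algebra_simps)
  finally show ?thesis .
qed

lemma prod_M:
  "prod_list (map (\<lambda>i. (M (unitvec i) ^ l) ^ nat (c i)) xs)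
     = M (\<lambda>j. int l * sum_list (map (\<lambda>i. int (nat (c i)) * unitvec i j) xs))"
proof (induction xs)
  case Nil
  show ?case using M0 by (simp add: zero_fun_def)
next
  case (Cons a xs)
  have "(M (unitvec a) ^ l) ^ nat (c a) = M (\<lambda>j. int l * (int (nat (c a)) * unitvec a j))"
    by (simp add: power_mult[symmetric] Mpow algebra_simps)
  then show ?case using Cons by (simp add: Mmul_l)
qed

end

lemma sum_unitvec: "finite S \<Longrightarrow> (\<Sum>i\<in>S. c i * unitvec i j) = (if j \<in> S then c j else (0::int))"
  by (subst sum.cong[OF refl, of _ _ "\<lambda>i. if j = i then c i else 0"]) (auto simp: unitvec_def)



theorem proposition4p4:
  fixes l :: nat and z :: complex and emb :: "complex \<Rightarrow> 'a::division_ring"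
    and lam :: "'n::{finite,linorder} \<Rightarrow> 'n \<Rightarrow> int"
    and M :: "('n \<Rightarrow> int) \<Rightarrow> 'a"
    and ex :: "'n set" and B :: "'n \<Rightarrow> 'n \<Rightarrow> int" and d :: "'n \<Rightarrow> int"
    and k :: 'n
  assumes "primitive_root l z"
    and "central_embedding z emb"
    and "toric_frame l z emb lam M"
    and "l_compatible l lam ex B d"
    and "coprime_cond l ex d"
    and "k \<in> ex"
  shows "M (unitvec k) ^ l * (mut_ek M B k) ^ l =
           prod_list (map (\<lambda>i. (M (unitvec i) ^ l) ^ nat (B i k))
                          (sorted_list_of_set {i. B i k > 0}))
         + prod_list (map (\<lambda>i. (M (unitvec i) ^ l) ^ nat (- B i k))
                          (sorted_list_of_set {i. B i k < 0}))"
proof -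
  have pr: "0 < l \<and> z ^ l = 1 \<and> (\<forall>m. 0 < m \<and> m < l \<longrightarrow> z ^ m \<noteq> 1)"
    using assms(1) unfolding primitive_root_def .
  then have lpos: "0 < l" and zl: "z ^ l = 1" and prim: "\<And>m. 0 < m \<Longrightarrow> m < l \<Longrightarrow> z ^ m \<noteq> 1"
    by blast+
  have tf: "skew_mod l lam \<and> M 0 = 1 \<and> (\<forall>f g. M f * M g = emb (eps_half l z (bform lam f g)) * M (f + g))"
    using assms(3) unfolding toric_frame_def by blast
  then have skew: "skew_mod l lam" and M0: "M 0 = 1"
    and Mmul: "\<And>f g. M f * M g = emb (eps_half l z (bform lam f g)) * M (f + g)"
    by blast+
  have lc: "(\<forall>j\<in>ex. d j > 0) \<and> (\<forall>i\<in>ex. \<forall>j\<in>ex. d i * B i j = - (d j * B j i)) \<and>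
     (\<forall>i j. j \<in> ex \<longrightarrow> (\<Sum>a\<in>UNIV. B a j * lam a i) mod int l = (if i = j then d j else 0) mod int l)"
    using assms(4) unfolding l_compatible_def .
  then have dpos: "d k > 0" and Bkk0: "d k * B k k = - (d k * B k k)"
    and compat: "\<forall>i. (\<Sum>a\<in>UNIV. B a k * lam a i) mod int l = (if i = k then d k else 0) mod int l"
    using assms(6) by blast+
  have Bkk: "B k k = 0" using Bkk0 dpos by simp
  have lodd: "odd l" and cop: "coprime (int l) (d k)"
    using assms(5,6) unfolding coprime_cond_def by auto
  interpret fctx l z emb lam M
    using lpos zl lodd assms(2) skew M0 Mmul by unfold_locales auto

  define b where "b = col B k"
  define dk where "dk = d k"
  define f1 where "f1 = - unitvec k + pos_part b"
  define f2 where "f2 = - unitvec k - neg_part b"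
  have bk: "b k = 0" using Bkk by (simp add: b_def col_def)
  have f2eq: "f2 = f1 - b"
    by (auto simp: fun_eq_iff f1_def f2_def pos_part_def neg_part_def)
  have hb: "int l dvd bform lam b g - g k * dk" for g
    using bform_col[of B k lam l "d k", OF compat] unfolding b_def dk_def .
  have f1k: "f1 k = -1" using bk by (simp add: f1_def unitvec_def pos_part_def)
  have d12: "int l dvd bform lam f1 f2 + dk"
  proof -
    have "bform lam f1 f2 + dk = bform lam f1 f1 - (bform lam f1 b + bform lam b f1)
          + (bform lam b f1 - f1 k * dk)"
      using f1k by (simp add: f2eq bform_diff_r)
    then show ?thesis
      using bform_self[OF skew lodd, of f1] bform_skew[OF skew, of f1 b] hb[of f1]
      by (metis dvd_add dvd_diff)
  qed
  have d21: "int l dvd bform lam f2 f1 - dk"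
  proof -
    have "bform lam f2 f1 - dk = (bform lam f2 f1 + bform lam f1 f2) - (bform lam f1 f2 + dk)"
      by simp
    then show ?thesis using bform_skew[OF skew, of f2 f1] d12 by (metis dvd_diff)
  qed
  define W where "W = Qs (2 * dk)"
  have Wc: "\<And>a. W * a = a * W" unfolding W_def by (rule Qs_central)
  have yx: "M f2 * M f1 = W * M f1 * M f2"
  proof -
    have "W * M f1 * M f2 = W * (Qs (bform lam f1 f2) * M (f1 + f2))"
      by (simp add: mult.assoc Mmul')
    also have "\<dots> = Qs (2 * dk + bform lam f1 f2) * M (f1 + f2)"
      unfolding W_def by (simp add: mult.assoc[symmetric] Qs_add)
    also have "Qs (2 * dk + bform lam f1 f2) = Qs (bform lam f2 f1)"
    proof (rule Qs_cong)
      have "2 * dk + bform lam f1 f2 - bform lam f2 f1 = (bform lam f1 f2 + dk) - (bform lam f2 f1 - dk)"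
        by simp
      then show "int l dvd 2 * dk + bform lam f1 f2 - bform lam f2 f1"
        using d12 d21 by (metis dvd_diff)
    qed
    also have "f1 + f2 = f2 + f1" by (simp add: add.commute)
    finally show ?thesis by (simp only: Mmul')
  qed
  have binom: "(M f1 + M f2) ^ l = (\<Sum>j\<le>l. qb W l j * M f1 ^ j * M f2 ^ (l - j))"
    by (rule qbinom[OF Wc yx])
  define m where "m = nat ((2 * dk) mod int l)"
  define w where "w = z ^ m"
  have Ww: "W = emb w" unfolding W_def Qs_def eps_half_def w_def m_def ..
  have wQ: "w \<in> Qfield z" unfolding w_def by (rule Qfield_zpow)
  have zdvd: "l dvd n" if "z ^ n = 1" for n
  proof (rule ccontr)
    assume "\<not> l dvd n"
    then have "0 < n mod l" by (simp add: dvd_eq_mod_eq_0)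
    moreover have "n mod l < l" using lpos by simp
    moreover have "z ^ (n mod l) = 1" using that zpow_mod[of n] by simp
    ultimately show False using prim by blast
  qed
  have copm: "coprime l m"
  proof -
    have "coprime (int l) (2 * dk)" using cop lodd by (simp add: dk_def)
    then have "coprime (int l) ((2 * dk) mod int l)" using lpos by simp
    moreover have "int m = (2 * dk) mod int l" unfolding m_def using lpos by simp
    ultimately have "coprime (int l) (int m)" by simp
    then show ?thesis by simp
  qed
  have wl: "w ^ l = 1" unfolding w_def by (simp add: power_mult[symmetric] mult.commute power_mult zl)
  have wi: "w ^ i \<noteq> 1" if "0 < i" "i < l" for i
  proof
    assume "w ^ i = 1"
    then have "z ^ (m * i) = 1" unfolding w_def by (simp add: power_mult)
    then have "l dvd m * i" by (rule zdvd)
    then have "l dvd i" using copm coprime_dvd_mult_right_iff by blast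
    then show False using that by (auto dest: dvd_imp_le)
  qed
  have qbz: "qb W l j = 0" if "0 < j" "j < l" for j
  proof -
    have "qb w l j = 0" by (rule qb_vanish[OF wl wi that])
    then show ?thesis unfolding Ww emb_qb[OF wQ, symmetric] by (simp add: emb0)
  qed
  have sum2: "(\<Sum>j\<le>l. qb W l j * M f1 ^ j * M f2 ^ (l - j)) = M f1 ^ l + M f2 ^ l"
  proof -
    have "(\<Sum>j\<le>l. qb W l j * M f1 ^ j * M f2 ^ (l - j))
        = (\<Sum>j\<in>{0, l}. qb W l j * M f1 ^ j * M f2 ^ (l - j))"
      by (rule sum.mono_neutral_right) (auto simp: qbz)
    also have "\<dots> = M f2 ^ l + M f1 ^ l" using lpos by (simp add: qb_nn)
    finally show ?thesis by (simp add: add.commute)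
  qed
  have mut: "mut_ek M B k = M f1 + M f2"
    unfolding mut_ek_def f1_def f2_def b_def ..
  have LHS: "M (unitvec k) ^ l * (mut_ek M B k) ^ l
      = M (\<lambda>j. int l * pos_part b j) + M (\<lambda>j. int l * (- neg_part b j))"
  proof -
    have "M (unitvec k) ^ l * (mut_ek M B k) ^ l = M (unitvec k) ^ l * M f1 ^ l + M (unitvec k) ^ l * M f2 ^ l"
      unfolding mut binom sum2 by (simp add: distrib_left)
    also have "\<dots> = M (\<lambda>j. int l * (unitvec k j + f1 j)) + M (\<lambda>j. int l * (unitvec k j + f2 j))"
      by (simp add: Mpow Mmul_l)
    also have "(\<lambda>j. int l * (unitvec k j + f1 j)) = (\<lambda>j. int l * pos_part b j)"
      by (simp add: f1_def)
    also have "(\<lambda>j. int l * (unitvec k j + f2 j)) = (\<lambda>j. int l * (- neg_part b j))"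
      by (simp add: f2_def)
    finally show ?thesis .
  qed
  have P: "prod_list (map (\<lambda>i. (M (unitvec i) ^ l) ^ nat (B i k)) (sorted_list_of_set {i. B i k > 0}))
      = M (\<lambda>j. int l * pos_part b j)"
  proof -
    have "prod_list (map (\<lambda>i. (M (unitvec i) ^ l) ^ nat (B i k)) (sorted_list_of_set {i. B i k > 0}))
       = M (\<lambda>j. int l * (\<Sum>i\<in>{i. B i k > 0}. int (nat (B i k)) * unitvec i j))"
      by (simp add: prod_M sum_list_distinct_conv_sum_set)
    also have "(\<lambda>j. int l * (\<Sum>i\<in>{i. B i k > 0}. int (nat (B i k)) * unitvec i j)) = (\<lambda>j. int l * pos_part b j)"
    proof
      fix j
      have "(\<Sum>i\<in>{i. B i k > 0}. int (nat (B i k)) * unitvec i j)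
          = (if j \<in> {i. B i k > 0} then int (nat (B j k)) else 0)"
        by (rule sum_unitvec) simp
      then show "int l * (\<Sum>i\<in>{i. B i k > 0}. int (nat (B i k)) * unitvec i j) = int l * pos_part b j"
        by (simp add: pos_part_def b_def col_def)
    qed
    finally show ?thesis .
  qed
  have N: "prod_list (map (\<lambda>i. (M (unitvec i) ^ l) ^ nat (- B i k)) (sorted_list_of_set {i. B i k < 0}))
      = M (\<lambda>j. int l * (- neg_part b j))"
  proof -
    have "prod_list (map (\<lambda>i. (M (unitvec i) ^ l) ^ nat (- B i k)) (sorted_list_of_set {i. B i k < 0}))
       = M (\<lambda>j. int l * (\<Sum>i\<in>{i. B i k < 0}. int (nat (- B i k)) * unitvec i j))"
      by (simp add: prod_M sum_list_distinct_conv_sum_set)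
    also have "(\<lambda>j. int l * (\<Sum>i\<in>{i. B i k < 0}. int (nat (- B i k)) * unitvec i j)) = (\<lambda>j. int l * (- neg_part b j))"
    proof
      fix j
      have "(\<Sum>i\<in>{i. B i k < 0}. int (nat (- B i k)) * unitvec i j)
          = (if j \<in> {i. B i k < 0} then int (nat (- B j k)) else 0)"
        by (rule sum_unitvec) simp
      then show "int l * (\<Sum>i\<in>{i. B i k < 0}. int (nat (- B i k)) * unitvec i j) = int l * (- neg_part b j)"
        by (simp add: neg_part_def b_def col_def)
    qed
    finally show ?thesis .
  qed
  show ?thesis unfolding LHS P N ..
qed


end
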